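(* Let $n\ge 2$ be an integer, $p,q\in\mathbb{R}$ with $q>0$, and let $M$ be a real $n\times n$ matrix whose $n^2$ entries are a permutation of the numbers $p, p+q, \dots, p+(n^2-1)q$. Set $$r := \frac pq + \frac{n^2-1}{2},\quad \rho := \frac{n^3+n^2+n+1}{12},\quad \sigma := nq^2\left(r^2 + \frac{n^4-1}{12}\right).$$ Then: if $r^2 < \rho$: $|\det M| \le \sigma^{n/2}$; if $r^2 = \rho$: $|\det M| \le n^n q^n |r| \rho^{\frac{n-1}{2}} = \sigma^{n/2}$; if $r^2 > \rho$: $|\det M| \le n^n q^n |r| \rho^{\frac{n-1}{2}} < \sigma^{n/2}$. *)

theory Defs
  imports "HOL-Analysis.Analysis"
begin

end

theory Submission imports Defs begin


lemma row_chi: "row i (\<chi> k. v k) = v i"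
  by (simp add: row_def vec_eq_iff)

lemma hadamard_orth:
  fixes A :: "real^'n^'n"
  assumes "\<And>i j. i \<noteq> j \<Longrightarrow> orthogonal (row i A) (row j A)"
  shows "\<bar>det A\<bar> \<le> (\<Prod>i\<in>UNIV. norm (row i A))"
proof -
  have d: "(A ** transpose A) $ i $ j = (if i = j then norm (row i A)^2 else 0)" for i j
    using assms[of i j]
    by (auto simp: matrix_matrix_mult_def inner_vec_def row_def transpose_def orthogonal_def power2_norm_eq_inner mult.commute)
  have "det A * det A = det (A ** transpose A)" by (simp add: det_mul det_transpose)
  also have "\<dots> = (\<Prod>i\<in>UNIV. norm (row i A)^2)"
    by (subst det_diagonal) (auto simp: d)
  also have "\<dots> = (\<Prod>i\<in>UNIV. norm (row i A))^2" by (simp add: prod_power_distrib)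
  finally have "\<bar>det A\<bar>^2 = (\<Prod>i\<in>UNIV. norm (row i A))^2" by (simp add: power2_eq_square)
  then have "\<bar>det A\<bar> = (\<Prod>i\<in>UNIV. norm (row i A))"
    by (subst (asm) power2_eq_iff_nonneg) (auto simp: prod_nonneg)
  then show ?thesis by simp
qed

lemma hadamard_gen:
  fixes K :: "'n::finite set"
  assumes "finite K"
  shows "\<forall>A :: real^'n^'n. (\<forall>i j. i \<notin> K \<longrightarrow> j \<notin> K \<longrightarrow> i \<noteq> j \<longrightarrow> orthogonal (row i A) (row j A))
     \<longrightarrow> \<bar>det A\<bar> \<le> (\<Prod>i\<in>UNIV. norm (row i A))"
using assms proof (induction K rule: finite_induct)
  case empty
  then show ?case using hadamard_orth by blast
next
  case (insert a K)
  show ?case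
  proof (intro allI impI)
    fix A :: "real^'n^'n"
    assume orth: "\<forall>i j. i \<notin> insert a K \<longrightarrow> j \<notin> insert a K \<longrightarrow> i \<noteq> j \<longrightarrow> orthogonal (row i A) (row j A)"
    define S where "S = {row j A | j. j \<notin> insert a K}"
    obtain y z where y: "y \<in> span S" and z: "\<And>w. w \<in> span S \<Longrightarrow> orthogonal z w" and yz: "row a A = y + z"
      using orthogonal_subspace_decomp_exists by blast
    define A' where "A' = (\<chi> k. if k = a then row a A + (- y) else row k A)"
    have "S \<subseteq> {row j A |j. j \<noteq> a}" unfolding S_def by auto
    then have "y \<in> span {row j A |j. j \<noteq> a}"
      using span_mono y by blast
    then have "-y \<in> vec.span {row j A |j. j \<noteq> a}"
      unfolding span_vec_eq by (rule span_neg)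
    then have detA': "det A' = det A" unfolding A'_def by (rule det_row_span)
    have rA': "row k A' = (if k = a then z else row k A)" for k
      unfolding A'_def row_chi using yz by auto
    have o': "\<forall>i j. i \<notin> K \<longrightarrow> j \<notin> K \<longrightarrow> i \<noteq> j \<longrightarrow> orthogonal (row i A') (row j A')"
    proof (intro allI impI)
      fix i j assume ij: "i \<notin> K" "j \<notin> K" "i \<noteq> j"
      show "orthogonal (row i A') (row j A')"
      proof (cases "i = a")
        case True
        then have "row j A \<in> span S" using ij unfolding S_def by (auto intro: span_base)
        then show ?thesis using True ij z rA' by auto
      next
        case False
        show ?thesis
        proof (cases "j = a")
          case True
          then have "row i A \<in> span S" using ij False unfolding S_def by (auto intro: span_base)
          then show ?thesis using True ij z rA' orthogonal_commute by metis
        next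
          case False
          then show ?thesis using \<open>i \<noteq> a\<close> ij orth rA' by auto
        qed
      qed
    qed
    have "orthogonal z y" using z y by blast
    then have "norm (row a A)^2 = norm y ^2 + norm z^2"
      using yz norm_add_Pythagorean[of y z] orthogonal_commute by auto
    then have "norm z ^2 \<le> norm (row a A)^2" by simp
    then have nz: "norm z \<le> norm (row a A)"
      by (rule power2_le_imp_le) simp
    have "\<bar>det A\<bar> = \<bar>det A'\<bar>" using detA' by simp
    also have "\<dots> \<le> (\<Prod>i\<in>UNIV. norm (row i A'))" using insert.IH o' by blast
    also have "\<dots> \<le> (\<Prod>i\<in>UNIV. norm (row i A))"
      by (rule prod_mono) (auto simp: rA' nz)
    finally show "\<bar>det A\<bar> \<le> (\<Prod>i\<in>UNIV. norm (row i A))" .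
  qed
qed

lemma hadamard:
  fixes A :: "real^'n^'n"
  shows "\<bar>det A\<bar> \<le> (\<Prod>i\<in>UNIV. norm (row i A))"
  using hadamard_gen[of "UNIV::'n set"] by auto



lemma mono_aux:
  fixes c x T :: real and m :: nat
  assumes "m \<ge> 1" "0 < c" "c \<le> x" "x \<le> T" "T \<le> (m+1)*c"
  shows "x*(T-x)^m \<le> c*(T-c)^m"
proof (cases "T = x")
  case True
  then show ?thesis using assms by (simp add: zero_power)
next
  case False
  define t where "t = T - x"
  define s where "s = T - c"
  have tpos: "t > 0" using False assms t_def by simp
  have st: "t \<le> s" using assms t_def s_def by simp
  have "1 + real m * ((s - t)/t) \<le> (1 + (s-t)/t)^m"
    by (rule Bernoulli_inequality) (use tpos st in \<open>simp add: field_simps\<close>)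
  also have "1 + (s-t)/t = s/t" using tpos by (simp add: field_simps)
  finally have b: "1 + real m * ((s - t)/t) \<le> (s/t)^m" .
  have "t^m * (1 + real m * ((s - t)/t)) \<le> s^m"
    using mult_left_mono[OF b, of "t^m"] tpos by (simp add: power_divide)
  then have b2: "c * (t^m * (1 + real m * ((s - t)/t))) \<le> c * s^m"
    using assms by simp
  have "x * t^m \<le> c * (t^m * (1 + real m * ((s - t)/t)))"
  proof -
    have xe: "x = c + (s - t)" using t_def s_def by simp
    have "c * (t^m * (1 + real m * ((s - t)/t))) - x * t^m = t^m * ((s-t) * (c*m - t)/t)"
      using tpos by (simp add: xe field_simps)
    moreover have "c*m - t \<ge> 0" using assms t_def by (simp add: algebra_simps)
    ultimately show ?thesis using tpos st
      by (smt (verit) divide_nonneg_pos mult_nonneg_nonneg zero_le_power)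
  qed
  then show ?thesis using b2 t_def s_def by simp
qed

lemma strict_aux:
  fixes t \<rho> :: real and N :: nat
  assumes "N \<ge> 2" "0 < \<rho>" "\<rho> < t"
  shows "real N^N * t * \<rho>^(N-1) < (t + (real N - 1)*\<rho>)^N"
proof -
  define e where "e = (t - \<rho>)/(N*\<rho>)"
  have epos: "e > 0" using assms by (simp add: e_def)
  have te: "t + (real N - 1)*\<rho> = N*\<rho>*(1+e)" using assms by (simp add: e_def field_simps)
  have "1 + real (N-1) * e \<le> (1+e)^(N-1)"
    by (rule Bernoulli_inequality) (use epos in simp)
  then have "(1+e)*(1 + real (N-1) * e) \<le> (1+e)^N"
    using epos assms by (metis Suc_diff_1 add_pos_pos less_eq_real_def mult_left_mono order_less_le_trans pos2 power_Suc zero_less_one)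
  moreover have "1 + real N * e < (1+e)*(1 + real (N-1) * e)"
    using assms epos by (simp add: of_nat_diff algebra_simps)
  ultimately have b: "1 + real N * e < (1+e)^N" by linarith
  have "real N^N * t * \<rho>^(N-1) = (N*\<rho>)^N * (1 + N*e)"
  proof -
    have "\<rho>^N = \<rho> * \<rho>^(N-1)" using assms by (metis Suc_diff_1 not_numeral_le_zero not_gr0 power_Suc)
    moreover have tt: "t = \<rho> * (1 + N*e)" using assms by (simp add: e_def field_simps)
    ultimately show ?thesis by (simp add: power_mult_distrib)
  qed
  also have "\<dots> < (N*\<rho>)^N * (1+e)^N"
    using b assms by simp
  also have "\<dots> = (t + (real N - 1)*\<rho>)^N" by (simp add: te power_mult_distrib)
  finally show ?thesis .
qed

lemma amgm_pow:
  fixes y :: "'a \<Rightarrow> real"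
  assumes "finite S" "S \<noteq> {}" "\<And>i. i \<in> S \<Longrightarrow> y i \<ge> 0"
  shows "(\<Prod>i\<in>S. y i) \<le> ((\<Sum>i\<in>S. y i)/card S)^(card S)"
proof -
  define P where "P = (\<Prod>i\<in>S. y i)"
  have P0: "P \<ge> 0" unfolding P_def using assms by (simp add: prod_nonneg)
  have cpos: "card S > 0" using assms by (simp add: card_gt_0_iff)
  have "P powr (1/card S) \<le> (\<Sum>i\<in>S. y i / card S)"
    using arith_geom_mean[OF assms] unfolding P_def by simp
  also have "\<dots> = (\<Sum>i\<in>S. y i)/card S" by (simp add: sum_divide_distrib)
  finally have le: "P powr (1/card S) \<le> (\<Sum>i\<in>S. y i)/card S" .
  have "P = (P powr (1/card S))^(card S)"
  proof (cases "P = 0")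
    case True then show ?thesis using cpos by simp
  next
    case False
    then have "P > 0" using P0 by simp
    then have "(P powr (1/card S))^(card S) = P powr ((1/card S) * card S)"
      by (simp add: powr_realpow[symmetric] powr_powr)
    then show ?thesis using cpos P0 by simp
  qed
  also have "\<dots> \<le> ((\<Sum>i\<in>S. y i)/card S)^(card S)"
    by (rule power_mono[OF le]) simp
  finally show ?thesis unfolding P_def .
qed


lemma sum_lin: "(\<Sum>k<m. (p + real k * q)) = real m * p + q * real m * (real m - 1) / 2"
  by (induction m) (auto simp: field_simps)

lemma sum_sq: "(\<Sum>k<m. (p + real k * q)^2) = real m * p^2 + p * q * real m * (real m - 1)
   + q^2 * (real m - 1) * real m * (2 * real m - 1) / 6"
  by (induction m) (auto simp: field_simps power2_eq_square)

lemma normsq: "norm (x::real^'n)^2 = (\<Sum>i\<in>UNIV. (x$i)^2)"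
  by (simp add: norm_vec_def L2_set_def sum_nonneg)

lemma column_mult: "column j (M ** A) = M *v column j (A :: real^'n^'n)"
  by (simp add: vec_eq_iff column_def matrix_matrix_mult_def matrix_vector_mult_def)

lemma row_mult: "row i (M ** A) = transpose A *v row i (M :: real^'n^'n)"
  by (simp add: vec_eq_iff row_def transpose_def matrix_matrix_mult_def matrix_vector_mult_def mult.commute)

lemma orth_norm: "orthogonal_matrix (Q::real^'n^'n) \<Longrightarrow> norm (Q *v x) = norm x"
  using orthogonal_transformation_matrix[of "(*v) Q"] orthogonal_transformation_norm
  by (simp add: matrix_of_matrix_vector_mul)

lemma powr_half_sq: "0 < (x::real) \<Longrightarrow> (x powr (real m / 2))^2 = x^m"
proof -
  assume "x > 0"
  then have "(x powr (real m / 2))^2 = x powr (real m)"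
    by (simp add: power2_eq_square powr_add[symmetric])
  then show ?thesis using \<open>x > 0\<close> by (simp add: powr_realpow)
qed

theorem mainTheorem7:
  fixes M :: "real ^ 'n ^ 'n" and p q :: real
  assumes n2: "CARD('n) \<ge> 2"
    and qpos: "q > 0"
    and perm: "\<exists>f. bij_betw f (UNIV :: ('n \<times> 'n) set) {0..<CARD('n)^2}
                    \<and> (\<forall>i j. M $ i $ j = p + real (f (i, j)) * q)"
  defines "n \<equiv> real CARD('n)"
  defines "r \<equiv> p / q + (n^2 - 1) / 2"
    and "\<rho> \<equiv> (n^3 + n^2 + n + 1) / 12"
  defines "\<sigma> \<equiv> n * q^2 * (r^2 + (n^4 - 1) / 12)"
  shows "(r^2 < \<rho> \<longrightarrow> \<bar>det M\<bar> \<le> \<sigma> powr (n / 2))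
       \<and> (r^2 = \<rho> \<longrightarrow> \<bar>det M\<bar> \<le> n^CARD('n) * q^CARD('n) * \<bar>r\<bar> * \<rho> powr ((n - 1) / 2)
                     \<and> n^CARD('n) * q^CARD('n) * \<bar>r\<bar> * \<rho> powr ((n - 1) / 2) = \<sigma> powr (n / 2))
       \<and> (r^2 > \<rho> \<longrightarrow> \<bar>det M\<bar> \<le> n^CARD('n) * q^CARD('n) * \<bar>r\<bar> * \<rho> powr ((n - 1) / 2)
                     \<and> n^CARD('n) * q^CARD('n) * \<bar>r\<bar> * \<rho> powr ((n - 1) / 2) < \<sigma> powr (n / 2))"
proof -
  define N where "N = CARD('n)"
  have nN: "n = real N" by (simp add: n_def N_def)
  have N2: "N \<ge> 2" using n2 N_def by simp
  have n2r: "n \<ge> 2" using N2 nN by simp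
  obtain f where bij: "bij_betw f (UNIV :: ('n \<times> 'n) set) {0..<N^2}"
     and Mf: "\<And>i j. M $ i $ j = p + real (f (i, j)) * q"
    using perm N_def by blast
  have reidx: "(\<Sum>i\<in>UNIV. \<Sum>j\<in>UNIV. g (M$i$j)) = (\<Sum>k<N^2. g (p + real k * q))" for g :: "real \<Rightarrow> real"
  proof -
    have "(\<Sum>i\<in>UNIV. \<Sum>j\<in>UNIV. g (M$i$j)) = (\<Sum>x\<in>(UNIV::('n\<times>'n) set). g (p + real (f x) * q))"
      unfolding sum.cartesian_product UNIV_Times_UNIV by (simp add: Mf case_prod_beta)
    also have "\<dots> = (\<Sum>k\<in>{0..<N^2}. g (p + real k * q))"
      using sum.reindex_bij_betw[OF bij, of "\<lambda>k. g (p + real k * q)"] by simp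
    finally show ?thesis by (simp add: lessThan_atLeast0)
  qed
  have S: "(\<Sum>i\<in>UNIV. \<Sum>j\<in>UNIV. M$i$j) = n^2*q*r"
  proof -
    have "(\<Sum>i\<in>UNIV. \<Sum>j\<in>UNIV. M$i$j) = n^2 * p + q * n^2 * (n^2 - 1) / 2"
      using reidx[of "\<lambda>x. x"] unfolding sum_lin nN by simp
    also have "\<dots> = n^2*q*r" using qpos unfolding r_def by (simp add: field_simps)
    finally show ?thesis .
  qed
  have T: "(\<Sum>i\<in>UNIV. norm (row i M)^2) = n*\<sigma>"
  proof -
    have "(\<Sum>i\<in>UNIV. norm (row i M)^2) = (\<Sum>i\<in>UNIV. \<Sum>j\<in>UNIV. (M$i$j)^2)"
      by (simp add: normsq row_def)
    also have "\<dots> = n^2 * p^2 + p * q * n^2 * (n^2 - 1) + q^2 * (n^2 - 1) * n^2 * (2 * n^2 - 1) / 6"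
      using reidx[of "\<lambda>x. x^2"] unfolding sum_sq nN by simp
    also have "\<dots> = n*\<sigma>"
    proof -
      define u where "u = p / q"
      have pu: "p = u * q" using qpos by (simp add: u_def)
      have ru: "r = u + (n^2 - 1)/2" by (simp add: r_def u_def)
      show ?thesis unfolding \<sigma>_def ru pu by (simp add: field_simps power2_eq_square eval_nat_numeral)
    qed
    finally show ?thesis .
  qed
  define e where "e = (\<chi> i::'n. 1 / sqrt n)"
  have npos: "n > 0" using n2r by simp
  have ne: "norm e = 1"
  proof -
    have "norm e ^2 = (\<Sum>i\<in>(UNIV::'n set). (1 / sqrt n)^2)" by (simp add: normsq e_def)
    also have "\<dots> = 1" using npos by (simp add: power_divide n_def)
    finally show ?thesis using norm_ge_zero[of e] power2_eq_1_iff by smt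
  qed
  obtain k :: 'n where True by simp
  obtain A where oA: "orthogonal_matrix A" and Ae: "A *v axis k 1 = e"
    using orthogonal_matrix_exists_basis[OF ne] by blast
  have colk: "column k A = e" using Ae matrix_vector_mult_basis by metis
  define y where "y j = norm (column j (M ** A))^2" for j
  have y0: "y j \<ge> 0" for j by (simp add: y_def)
  have detA: "\<bar>det A\<bar> = 1" using det_orthogonal_matrix[OF oA] by auto
  have detle: "\<bar>det M\<bar>^2 \<le> (\<Prod>j\<in>UNIV. y j)"
  proof -
    have "\<bar>det M\<bar> = \<bar>det (transpose (M ** A))\<bar>" by (simp add: det_transpose det_mul abs_mult detA)
    also have "\<dots> \<le> (\<Prod>j\<in>UNIV. norm (row j (transpose (M**A))))" by (rule hadamard)
    also have "\<dots> = (\<Prod>j\<in>UNIV. norm (column j (M**A)))" by (simp add: row_transpose)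
    finally have h: "\<bar>det M\<bar> \<le> (\<Prod>j\<in>UNIV. norm (column j (M**A)))" .
    have "\<bar>det M\<bar>^2 \<le> (\<Prod>j\<in>UNIV. norm (column j (M**A)))^2" by (rule power_mono[OF h]) simp
    also have "\<dots> = (\<Prod>j\<in>UNIV. y j)" by (simp add: y_def prod_power_distrib)
    finally show ?thesis .
  qed
  have sumy: "(\<Sum>j\<in>UNIV. y j) = n*\<sigma>"
  proof -
    have "(\<Sum>j\<in>UNIV. y j) = (\<Sum>j\<in>UNIV. \<Sum>i\<in>UNIV. ((M**A)$i$j)^2)" by (simp add: y_def normsq column_def)
    also have "\<dots> = (\<Sum>i\<in>UNIV. \<Sum>j\<in>UNIV. ((M**A)$i$j)^2)" by (rule sum.swap)
    also have "\<dots> = (\<Sum>i\<in>UNIV. norm (row i (M**A))^2)" by (simp add: normsq row_def)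
    also have "\<dots> = (\<Sum>i\<in>UNIV. norm (row i M)^2)" using oA by (simp only: row_mult orth_norm orthogonal_matrix_transpose)
    finally show ?thesis using T by simp
  qed
  have yk: "n^2*q^2*r^2 \<le> y k"
  proof -
    have "e \<bullet> (M *v e) = (\<Sum>i\<in>UNIV. \<Sum>j\<in>UNIV. M$i$j * ((1/sqrt n) * (1/sqrt n)))"
      by (simp add: e_def inner_vec_def matrix_vector_mult_def sum_distrib_left sum_distrib_right mult_ac)
    also have "\<dots> = (\<Sum>i\<in>UNIV. \<Sum>j\<in>UNIV. M$i$j) / n"
      using npos by (simp add: sum_divide_distrib)
    also have "\<dots> = n*q*r" using S npos by (simp add: power2_eq_square)
    finally have eq: "e \<bullet> (M *v e) = n*q*r" .
    have "\<bar>e \<bullet> (M *v e)\<bar> \<le> norm e * norm (M *v e)" by (rule Cauchy_Schwarz_ineq2)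
    then have "\<bar>n*q*r\<bar> \<le> norm (M *v e)" using eq ne by simp
    then have "\<bar>n*q*r\<bar>^2 \<le> norm (M *v e)^2" by (rule power_mono) simp
    moreover have "y k = norm (M *v e)^2" by (simp add: y_def column_mult colk)
    ultimately show ?thesis by (simp add: power_mult_distrib)
  qed
  have Npos: "N \<ge> 1" using N2 by simp
  have cardU: "card (UNIV::'n set) = N" by (simp add: N_def)
  have n4: "(n^4 - 1)/12 = (n - 1) * \<rho>" unfolding \<rho>_def by (simp add: field_simps eval_nat_numeral)
  have \<rho>pos: "\<rho> > 0" unfolding \<rho>_def using npos by (simp add: add_pos_pos)
  have \<sigma>eq: "\<sigma> = n * q^2 * (r^2 + (n - 1) * \<rho>)" unfolding \<sigma>_def n4 ..
  have \<sigma>pos: "\<sigma> > 0" unfolding \<sigma>eq using npos qpos \<rho>pos n2r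
    by (intro mult_pos_pos) (auto intro: add_nonneg_pos)
  have \<sigma>2: "(\<sigma> powr (n/2))^2 = \<sigma>^N" using powr_half_sq[OF \<sigma>pos, of N] nN by simp
  have gen: "\<bar>det M\<bar> \<le> \<sigma> powr (n/2)"
  proof -
    have "(\<Prod>j\<in>UNIV. y j) \<le> ((\<Sum>j\<in>UNIV. y j)/card (UNIV::'n set))^(card (UNIV::'n set))"
      by (rule amgm_pow) (auto simp: y0)
    also have "\<dots> = \<sigma>^N" using sumy cardU nN npos by simp
    finally have "\<bar>det M\<bar>^2 \<le> (\<sigma> powr (n/2))^2" using detle \<sigma>2 by simp
    then show ?thesis by (rule power2_le_imp_le) simp
  qed
  define B where "B = n^N * q^N * \<bar>r\<bar> * \<rho> powr ((n - 1) / 2)"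
  have B0: "B \<ge> 0" unfolding B_def using npos qpos by simp
  have B2: "B^2 = n^N * q^(2*N) * (real N^N * r^2 * \<rho>^(N-1))"
  proof -
    have "n - 1 = real (N - 1)" using Npos nN by simp
    then have "(\<rho> powr ((n - 1) / 2))^2 = \<rho>^(N-1)" using powr_half_sq[OF \<rho>pos, of "N-1"] by simp
    then show ?thesis unfolding B_def using nN
      by (simp add: power_mult_distrib power_mult power2_eq_square mult_ac)
  qed
  have \<sigma>N: "\<sigma>^N = n^N * q^(2*N) * (r^2 + (real N - 1) * \<rho>)^N"
    unfolding \<sigma>eq nN by (simp add: power_mult_distrib power_mult)
  have big: "\<bar>det M\<bar> \<le> B" if hr: "r^2 \<ge> \<rho>"
  proof -
    define c where "c = n^2*q^2*r^2"
    have "r^2 > 0" using hr \<rho>pos by linarith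
    then have cpos: "c > 0" unfolding c_def using npos qpos by simp
    have fin: "finite (UNIV - {k})" by simp
    have ne2: "UNIV - {k} \<noteq> {}"
    proof
      assume "UNIV - {k} = {}"
      then have "(UNIV::'n set) = {k}" by auto
      then have "card (UNIV::'n set) = 1" by (metis card.empty card_insert_disjoint empty_iff finite.emptyI One_nat_def)
      then show False using N2 N_def by simp
    qed
    have cardk: "card (UNIV - {k}) = N - 1" using cardU by (simp add: card_Diff_singleton)
    have sumk: "(\<Sum>j\<in>UNIV - {k}. y j) = n*\<sigma> - y k"
      using sum.remove[of UNIV k y] sumy by simp
    have "(\<Prod>j\<in>UNIV. y j) = y k * (\<Prod>j\<in>UNIV - {k}. y j)" using prod.remove[of UNIV k y] by simp
    also have "\<dots> \<le> y k * ((n*\<sigma> - y k)/(N-1))^(N-1)"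
      using amgm_pow[OF fin ne2, of y] y0 sumk cardk by (intro mult_left_mono) auto
    also have "\<dots> = (y k * (n*\<sigma> - y k)^(N-1)) / (real (N-1))^(N-1)"
      by (simp add: power_divide)
    also have "\<dots> \<le> (c * (n*\<sigma> - c)^(N-1)) / (real (N-1))^(N-1)"
    proof (rule divide_right_mono)
      have "y k \<le> n*\<sigma>" using sumk sum_nonneg[of "UNIV - {k}" y] y0 by smt
      moreover have "n*\<sigma> \<le> real (N - 1 + 1) * c"
      proof -
        have "n*\<sigma> = n^2*q^2*(r^2 + (n-1)*\<rho>)" unfolding \<sigma>eq by (simp add: power2_eq_square)
        also have "\<dots> \<le> n^2*q^2*(r^2 + (n-1)*r^2)"
          using hr n2r by (intro mult_left_mono add_left_mono) auto
        also have "\<dots> = real (N - 1 + 1) * c" using Npos nN unfolding c_def by (simp add: algebra_simps)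
        finally show ?thesis .
      qed
      ultimately show "y k * (n*\<sigma> - y k)^(N-1) \<le> c * (n*\<sigma> - c)^(N-1)"
        using mono_aux[of "N-1" c "y k" "n*\<sigma>"] N2 cpos yk c_def by simp
    qed simp
    also have "\<dots> = B^2"
    proof -
      have "n*\<sigma> - c = real (N-1) * (n^2*q^2*\<rho>)" unfolding \<sigma>eq c_def using Npos nN
        by (simp add: algebra_simps power2_eq_square)
      then have "(c * (n*\<sigma> - c)^(N-1)) / (real (N-1))^(N-1) = c * (n^2*q^2*\<rho>)^(N-1)"
        using N2 by (simp add: power_mult_distrib)
      also have "\<dots> = B^2" unfolding B2 c_def
      proof -
        obtain m where Nm: "N = Suc m" using Npos by (metis Suc_diff_1 le_numeral_extra(2) less_le_trans zero_less_one)
        have "N - 1 = m" using Nm by simp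
        have e1: "n^N = n * n^(N-1)" "q^(2*N) = q^2 * q^(2*(N-1))" "real N^N = n * n^(N-1)"
          using Nm nN by (simp_all add: power2_eq_square)
        have e2: "(n\<^sup>2 * q\<^sup>2 * \<rho>) ^ (N - 1) = n^(N-1) * n^(N-1) * q^(2*(N-1)) * \<rho>^(N-1)"
          by (simp only: power_mult_distrib power_mult[symmetric] power_add[symmetric] mult_2)
        show "n\<^sup>2 * q\<^sup>2 * r\<^sup>2 * (n\<^sup>2 * q\<^sup>2 * \<rho>) ^ (N - 1) = n ^ N * q ^ (2 * N) * (real N ^ N * r\<^sup>2 * \<rho> ^ (N - 1))"
          unfolding e1 e2 by (simp only: power2_eq_square ac_simps)
      qed
      finally show ?thesis .
    qed
    finally have "\<bar>det M\<bar>^2 \<le> B^2" using detle by simp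
    then show ?thesis using B0 by (rule power2_le_imp_le)
  qed
  have eqc: "B = \<sigma> powr (n/2)" if hr: "r^2 = \<rho>"
  proof -
    have a: "\<rho> + (real N - 1) * \<rho> = real N * \<rho>" by (simp add: algebra_simps)
    have b: "\<rho>^N = \<rho> * \<rho>^(N-1)" using Npos by (metis Suc_diff_1 le_numeral_extra(2) less_le_trans zero_less_one power_Suc)
    have "B^2 = (\<sigma> powr (n/2))^2" unfolding B2 \<sigma>2 \<sigma>N hr a power_mult_distrib b
      by (simp add: ac_simps)
    then show ?thesis using B0 by (simp add: power2_eq_iff_nonneg)
  qed
  have ltc: "B < \<sigma> powr (n/2)" if hr: "r^2 > \<rho>"
  proof -
    have "real N^N * r^2 * \<rho>^(N-1) < (r^2 + (real N - 1)*\<rho>)^N"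
      by (rule strict_aux) (use N2 \<rho>pos hr in auto)
    then have "B^2 < (\<sigma> powr (n/2))^2" unfolding B2 \<sigma>2 \<sigma>N
      using npos qpos by simp
    then show ?thesis by (rule power2_less_imp_less) simp
  qed
  show ?thesis
    using gen big eqc ltc unfolding B_def N_def by auto
qed
end
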